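(* Let $f\colon\mathbb R\to\mathbb R$ be continuous with $|f(x)|\leqslant a\cosh(bx)$ for all $x$, for some $a>0$, $b\in\mathbb R$. Fix $\lambda>0$. Let $\rho$ be a compactly supported Borel probability measure on $\mathbb R$, let $d>0$ be such that $\operatorname{supp}\rho\subset[-d,d]$, and for $n\geqslant1$ let $I^\rho_n=[-nd,nd]$, whose length is $L(I^\rho_n)=2nd$. Then for every $\epsilon>0$ there exists $n_0>0$ such that, for every $x\in\operatorname{supp}\rho$, $$\sum_{n=n_0}^\infty\frac{e^{-\lambda}\lambda^n}{(n+1)!}\Big\langle\delta_x*\rho^{*n},\ |f|+\epsilon+a\cosh\big(bL(I^\rho_{n_0})\big)\Big\rangle<\epsilon,$$ and $$\sum_{n=n_0}^\infty\frac{e^{-\lambda}\lambda^n}{(n+1)!}\Big\langle\rho^{*(n+1)},\ |f|+\epsilon+a\cosh\big(bL(I^\rho_{n_0})\big)\Big\rangle<\epsilon.$$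
   Context: $\langle\tau,\phi\rangle=\int\phi\,d\tau$; $*$ is convolution of measures, $\rho^{*n}$ the $n$-th convolution power with $\rho^{*0}=\delta_0$; $\delta_a$ is the Dirac measure at $a$. *)

theory Defs
  imports "HOL-Probability.Probability"
begin

definition measure_support :: "real measure \<Rightarrow> real set" where
  "measure_support M = {x. \<forall>e>0. emeasure M (ball x e) > 0}"

fun conv_pow :: "real measure \<Rightarrow> nat \<Rightarrow> real measure" where
  "conv_pow M 0 = return borel 0"
| "conv_pow M (Suc n) = convolution M (conv_pow M n)"

end

theory Submission imports Defs begin

lemma conv_prob:
  fixes M N :: "real measure"
  assumes "prob_space M" "prob_space N" "sets M = sets borel" "sets N = sets borel"
  shows "prob_space (convolution M N)"
proof -
  interpret pair_prob_space M N using assms by (simp add: pair_prob_space_def pair_sigma_finite_def prob_space_imp_sigma_finite)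
  have s: "sets (M \<Otimes>\<^sub>M N) = sets (borel \<Otimes>\<^sub>M borel)"
    by (rule sets_pair_measure_cong) (simp_all only: assms(3,4))
  show ?thesis unfolding convolution_def by (rule prob_space_distr) (simp add: measurable_cong_sets[OF s refl])
qed

lemma conv_AE:
  fixes M N :: "real measure"
  assumes "prob_space M" "prob_space N" "sets M = sets borel" "sets N = sets borel"
    and "AE x in M. \<bar>x\<bar> \<le> r" "AE y in N. \<bar>y\<bar> \<le> s"
  shows "AE z in convolution M N. \<bar>z\<bar> \<le> r + s"
proof -
  interpret pair_prob_space M N using assms by (simp add: pair_prob_space_def pair_sigma_finite_def prob_space_imp_sigma_finite)
  have s: "sets (M \<Otimes>\<^sub>M N) = sets (borel \<Otimes>\<^sub>M borel)"
    by (rule sets_pair_measure_cong) (simp_all only: assms(3,4))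
  have "AE p in M \<Otimes>\<^sub>M N. \<bar>fst p + snd p\<bar> \<le> r + s"
  proof (rule AE_pair_measure)
    show "{x \<in> space (M \<Otimes>\<^sub>M N). \<bar>fst x + snd x\<bar> \<le> r + s} \<in> sets (M \<Otimes>\<^sub>M N)"
    proof -
      have "(\<lambda>x. \<bar>fst x + snd x\<bar> \<le> r + s) \<in> measurable (borel \<Otimes>\<^sub>M borel) (count_space UNIV)"
        by measurable
      then have "(\<lambda>x. \<bar>fst x + snd x\<bar> \<le> r + s) \<in> measurable (M \<Otimes>\<^sub>M N) (count_space UNIV)"
        by (subst measurable_cong_sets[OF s refl])
      then show ?thesis by (simp only: pred_def)
    qed
    show "AE x in M. AE y in N. \<bar>fst (x, y) + snd (x, y)\<bar> \<le> r + s"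
      using assms(5) apply eventually_elim using assms(6) apply (rule AE_mp)
      by (auto intro!: AE_I2)
  qed
  then show ?thesis unfolding convolution_def
    by (subst AE_distr_iff) (auto simp: case_prod_beta measurable_cong_sets[OF s refl])
qed

lemma conv_pow_facts:
  assumes "prob_space rho" "sets rho = sets borel" "AE y in rho. \<bar>y\<bar> \<le> d"
  shows "prob_space (conv_pow rho n) \<and> sets (conv_pow rho n) = sets borel \<and> (AE y in conv_pow rho n. \<bar>y\<bar> \<le> real n * d)"
proof (induction n)
  case 0
  have "AE y in conv_pow rho 0. \<bar>y\<bar> \<le> real 0 * d"
    unfolding conv_pow.simps by (subst AE_return) auto
  then show ?case by (auto simp: prob_space_return)
next
  case (Suc n)
  then have P: "prob_space (conv_pow rho n)" and S: "sets (conv_pow rho n) = sets borel"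
    and A: "AE y in conv_pow rho n. \<bar>y\<bar> \<le> real n * d" by auto
  have "AE y in conv_pow rho (Suc n). \<bar>y\<bar> \<le> d + real n * d"
    using conv_AE[OF assms(1) P assms(2) S assms(3) A] by (simp only: conv_pow.simps)
  moreover have "d + real n * d = real (Suc n) * d" by (simp add: algebra_simps)
  ultimately show ?case using conv_prob[OF assms(1) P assms(2) S] by simp
qed

lemma support_AE:
  fixes rho :: "real measure"
  assumes "sets rho = sets borel" "measure_support rho \<subseteq> {-d..d}"
  shows "AE y in rho. \<bar>y\<bar> \<le> d"
proof -
  define F where "F = {ball x e | x e. e > 0 \<and> emeasure rho (ball x e) = 0}"
  obtain F' where F': "F' \<subseteq> F" "countable F'" "\<Union>F' = \<Union>F"
    using Lindelof[of F] unfolding F_def by auto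
  have "(\<Union>B\<in>F'. B) \<in> null_sets rho"
    apply (rule null_sets_UN'[OF F'(2)])
    using F'(1) assms(1) unfolding F_def by (auto simp: null_sets_def)
  moreover have "{y \<in> space rho. \<not> \<bar>y\<bar> \<le> d} \<subseteq> (\<Union>B\<in>F'. B)"
  proof
    fix y assume y: "y \<in> {y \<in> space rho. \<not> \<bar>y\<bar> \<le> d}"
    then have "y \<notin> measure_support rho" using assms(2) by (auto simp: abs_le_iff)
    then obtain e where "e > 0" "\<not> emeasure rho (ball y e) > 0"
      unfolding measure_support_def by auto
    then have "ball y e \<in> F" unfolding F_def by auto
    then have "y \<in> \<Union>F" using \<open>e > 0\<close> by (metis UnionI centre_in_ball)
    then show "y \<in> (\<Union>B\<in>F'. B)" using F'(3) by simp
  qed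
  ultimately show ?thesis by (intro AE_I'[where N="\<Union>B\<in>F'. B"]) auto
qed

lemma cosh_le_exp_abs: "cosh (x::real) \<le> exp \<bar>x\<bar>"
  unfolding cosh_def by (cases "x \<ge> 0") (auto simp: field_simps)

lemma term_bound:
  fixes f :: "real \<Rightarrow> real" and \<mu> :: "real measure"
  assumes "prob_space \<mu>" "sets \<mu> = sets borel" "AE y in \<mu>. \<bar>y\<bar> \<le> real (n+1) * d"
    and "d > 0" "a > 0" "\<epsilon> > 0" "lam > 0" "n0 \<le> n"
    and fb: "\<And>x. \<bar>f x\<bar> \<le> a * cosh (b * x)"
  shows "ennreal (exp (-lam) * lam ^ n / fact (n + 1)) *
     (\<integral>\<^sup>+ y. ennreal (\<bar>f y\<bar> + \<epsilon> + a * cosh (b * (2 * real n0 * d))) \<partial>\<mu>)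
     \<le> ennreal (exp (-lam) * (2*a+\<epsilon>) / lam * ((lam * exp (2*\<bar>b\<bar>*d)) ^ (n+1) / fact (n+1)))"
proof -
  interpret prob_space \<mu> by fact
  define Q where "Q = exp (2*\<bar>b\<bar>*d) ^ (n+1)"
  have Qe: "Q = exp (real (n+1) * (2*\<bar>b\<bar>*d))" unfolding Q_def by (subst exp_of_nat_mult) simp
  have Q1: "1 \<le> Q" unfolding Q_def using assms(4) by (intro one_le_power) auto
  have pt: "\<bar>f y\<bar> + \<epsilon> + a * cosh (b * (2 * real n0 * d)) \<le> (2*a+\<epsilon>) * Q"
    if y: "\<bar>y\<bar> \<le> real (n+1) * d" for y
  proof -
    have "\<bar>f y\<bar> \<le> a * exp \<bar>b*y\<bar>"
      using fb[of y] cosh_le_exp_abs[of "b*y"] assms(5) by (meson mult_left_mono less_imp_le order_trans)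
    also have "\<dots> \<le> a * Q"
    proof -
      have "\<bar>b*y\<bar> \<le> \<bar>b\<bar> * (real (n+1) * d)" unfolding abs_mult using y by (simp add: mult_left_mono)
      also have "\<dots> \<le> real (n+1) * (2*\<bar>b\<bar>*d)" using assms(4) by (simp add: mult_nonneg_nonneg)
      finally show ?thesis unfolding Qe using assms(5) by simp
    qed
    finally have 1: "\<bar>f y\<bar> \<le> a * Q" .
    have "a * cosh (b * (2 * real n0 * d)) \<le> a * exp \<bar>b * (2 * real n0 * d)\<bar>"
      using cosh_le_exp_abs assms(5) by simp
    also have "\<dots> \<le> a * Q"
    proof -
      have "\<bar>b * (2 * real n0 * d)\<bar> = real n0 * (2*\<bar>b\<bar>*d)" using assms(4) by (simp add: abs_mult)
      also have "\<dots> \<le> real (n+1) * (2*\<bar>b\<bar>*d)" using assms(4,8) by (intro mult_right_mono) auto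
      finally show ?thesis unfolding Qe using assms(5) by simp
    qed
    finally have 2: "a * cosh (b * (2 * real n0 * d)) \<le> a * Q" .
    have 3: "\<epsilon> \<le> \<epsilon> * Q" using Q1 assms(6) by simp
    show ?thesis using 1 2 3 by (simp add: algebra_simps)
  qed
  have "(\<integral>\<^sup>+ y. ennreal (\<bar>f y\<bar> + \<epsilon> + a * cosh (b * (2 * real n0 * d))) \<partial>\<mu>) \<le> (\<integral>\<^sup>+ y. ennreal ((2*a+\<epsilon>) * Q) \<partial>\<mu>)"
  proof (rule nn_integral_mono_AE)
    show "AE y in \<mu>. ennreal (\<bar>f y\<bar> + \<epsilon> + a * cosh (b * (2 * real n0 * d))) \<le> ennreal ((2*a+\<epsilon>) * Q)"
      using assms(3) by eventually_elim (intro ennreal_leI pt)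
  qed
  also have "\<dots> = ennreal ((2*a+\<epsilon>) * Q)" by (simp add: emeasure_space_1)
  finally have I: "(\<integral>\<^sup>+ y. ennreal (\<bar>f y\<bar> + \<epsilon> + a * cosh (b * (2 * real n0 * d))) \<partial>\<mu>) \<le> ennreal ((2*a+\<epsilon>) * Q)" .
  have "ennreal (exp (-lam) * lam ^ n / fact (n + 1)) *
     (\<integral>\<^sup>+ y. ennreal (\<bar>f y\<bar> + \<epsilon> + a * cosh (b * (2 * real n0 * d))) \<partial>\<mu>)
     \<le> ennreal (exp (-lam) * lam ^ n / fact (n + 1)) * ennreal ((2*a+\<epsilon>) * Q)"
    by (rule mult_left_mono[OF I]) simp
  also have "\<dots> = ennreal (exp (-lam) * lam ^ n / fact (n + 1) * ((2*a+\<epsilon>) * Q))"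
    using assms(5,6,7) Q1 by (subst ennreal_mult) auto
  also have "exp (-lam) * lam ^ n / fact (n + 1) * ((2*a+\<epsilon>) * Q) =
     exp (-lam) * (2*a+\<epsilon>) / lam * ((lam * exp (2*\<bar>b\<bar>*d)) ^ (n+1) / fact (n+1))"
  proof -
    have "exp (-lam) * lam ^ n / fact (n + 1) * ((2*a+\<epsilon>) * E ^ (n+1)) =
     exp (-lam) * (2*a+\<epsilon>) / lam * ((lam * E) ^ (n+1) / fact (n+1))" for E
      using assms(7) by (simp add: power_mult_distrib)
    then show ?thesis unfolding Q_def .
  qed
  finally show ?thesis .
qed

theorem lemma2:
  fixes f :: "real \<Rightarrow> real" and a b lam d :: real and rho :: "real measure"
  assumes "continuous_on UNIV f"
    and "a > 0"
    and "\<And>x. \<bar>f x\<bar> \<le> a * cosh (b * x)"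
    and "lam > 0"
    and "prob_space rho" and "sets rho = sets borel"
    and "compact (measure_support rho)"
    and "d > 0" and "measure_support rho \<subseteq> {-d..d}"
  shows "\<forall>\<epsilon>>0. \<exists>n0::nat. n0 > 0 \<and>
     (\<forall>x\<in>measure_support rho.
        (\<Sum>k. ennreal (exp (-lam) * lam ^ (k + n0) / fact (k + n0 + 1)) *
           (\<integral>\<^sup>+ y. ennreal (\<bar>f y\<bar> + \<epsilon> + a * cosh (b * (2 * real n0 * d)))
              \<partial>(convolution (return borel x) (conv_pow rho (k + n0))))) < ennreal \<epsilon>) \<and>
     (\<Sum>k. ennreal (exp (-lam) * lam ^ (k + n0) / fact (k + n0 + 1)) *
           (\<integral>\<^sup>+ y. ennreal (\<bar>f y\<bar> + \<epsilon> + a * cosh (b * (2 * real n0 * d)))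
              \<partial>(conv_pow rho (k + n0 + 1)))) < ennreal \<epsilon>"
proof (intro allI impI)
  fix \<epsilon> :: real assume e: "\<epsilon> > 0"
  note A = assms
  have rhoAE: "AE y in rho. \<bar>y\<bar> \<le> d" using support_AE A(6,9) .
  define z where "z = lam * exp (2*\<bar>b\<bar>*d)"
  define C where "C = exp (-lam) * (2*a+\<epsilon>) / lam"
  define g where "g = (\<lambda>m::nat. z ^ m / fact m)"
  have Cpos: "C > 0" unfolding C_def using A(2,4) e by simp
  have gnn: "g m \<ge> 0" for m unfolding g_def z_def using A(4) by simp
  have sg: "summable g" unfolding g_def using summable_exp[of z] by (simp add: field_simps)
  have "(\<lambda>N. \<Sum>k. g (k + N)) \<longlonglongrightarrow> 0" by (rule suminf_exist_split2[OF sg])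
  then have "eventually (\<lambda>N. \<bar>(\<Sum>k. g (k + N)) - 0\<bar> < \<epsilon> / C) sequentially"
    using Cpos e unfolding tendsto_iff dist_real_def by (auto intro: divide_pos_pos)
  then obtain N0 where N0: "\<And>N. N \<ge> N0 \<Longrightarrow> \<bar>\<Sum>k. g (k + N)\<bar> < \<epsilon> / C"
    unfolding eventually_sequentially by auto
  define n0 where "n0 = N0 + 1"
  have n0: "n0 > 0" unfolding n0_def by simp
  have tail: "\<bar>\<Sum>k. g (k + (n0 + 1))\<bar> < \<epsilon> / C" using N0[of "n0+1"] unfolding n0_def by simp
  have sgt: "summable (\<lambda>k. g (k + (n0+1)))" using sg by (rule summable_ignore_initial_segment)
  have key: "(\<Sum>k. T k) < ennreal \<epsilon>"
    if T: "\<And>k. T k \<le> ennreal (C * g (k + n0 + 1))" for T :: "nat \<Rightarrow> ennreal"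
  proof -
    have "(\<Sum>k. T k) \<le> (\<Sum>k. ennreal (C * g (k + n0 + 1)))"
      by (intro suminf_le T) auto
    also have "\<dots> = ennreal (\<Sum>k. C * g (k + n0 + 1))"
      using sgt Cpos gnn by (intro suminf_ennreal2 summable_mult) (auto simp: add.assoc)
    also have "(\<Sum>k. C * g (k + n0 + 1)) = C * (\<Sum>k. g (k + (n0 + 1)))"
      using sgt by (subst suminf_mult) (auto simp: add.assoc)
    finally have le: "(\<Sum>k. T k) \<le> ennreal (C * (\<Sum>k. g (k + (n0 + 1))))" .
    have "C * (\<Sum>k. g (k + (n0 + 1))) < \<epsilon>" using tail Cpos by (simp add: field_simps abs_less_iff)
    then have "ennreal (C * (\<Sum>k. g (k + (n0 + 1)))) < ennreal \<epsilon>" using e by (simp add: ennreal_lessI)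
    with le show ?thesis by (rule le_less_trans)
  qed
  have cp: "prob_space (conv_pow rho n) \<and> sets (conv_pow rho n) = sets borel \<and> (AE y in conv_pow rho n. \<bar>y\<bar> \<le> real n * d)" for n
    using conv_pow_facts[OF A(5,6) rhoAE] .
  show "\<exists>n0::nat. n0 > 0 \<and>
     (\<forall>x\<in>measure_support rho.
        (\<Sum>k. ennreal (exp (-lam) * lam ^ (k + n0) / fact (k + n0 + 1)) *
           (\<integral>\<^sup>+ y. ennreal (\<bar>f y\<bar> + \<epsilon> + a * cosh (b * (2 * real n0 * d)))
              \<partial>(convolution (return borel x) (conv_pow rho (k + n0))))) < ennreal \<epsilon>) \<and>
     (\<Sum>k. ennreal (exp (-lam) * lam ^ (k + n0) / fact (k + n0 + 1)) *
           (\<integral>\<^sup>+ y. ennreal (\<bar>f y\<bar> + \<epsilon> + a * cosh (b * (2 * real n0 * d)))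
              \<partial>(conv_pow rho (k + n0 + 1)))) < ennreal \<epsilon>"
  proof (intro exI conjI ballI)
    show "n0 > 0" by (rule n0)
  next
    fix x assume x: "x \<in> measure_support rho"
    then have xd: "\<bar>x\<bar> \<le> d" using A(9) by (auto simp: abs_le_iff)
    have xAE: "AE y in return borel x. \<bar>y\<bar> \<le> d"
      using xd by (subst AE_return) auto
    show "(\<Sum>k. ennreal (exp (-lam) * lam ^ (k + n0) / fact (k + n0 + 1)) *
           (\<integral>\<^sup>+ y. ennreal (\<bar>f y\<bar> + \<epsilon> + a * cosh (b * (2 * real n0 * d)))
              \<partial>(convolution (return borel x) (conv_pow rho (k + n0))))) < ennreal \<epsilon>"
    proof (rule key)
      fix k
      have P: "prob_space (convolution (return borel x) (conv_pow rho (k + n0)))"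
        using conv_prob[OF prob_space_return _ _ ] cp[of "k+n0"] by auto
      have "AE y in convolution (return borel x) (conv_pow rho (k + n0)). \<bar>y\<bar> \<le> d + real (k+n0) * d"
        using conv_AE[OF prob_space_return _ _ _ xAE] cp[of "k+n0"] by auto
      then have Q: "AE y in convolution (return borel x) (conv_pow rho (k + n0)). \<bar>y\<bar> \<le> real (k+n0+1) * d"
        by (simp add: algebra_simps)
      show "ennreal (exp (-lam) * lam ^ (k + n0) / fact (k + n0 + 1)) *
           (\<integral>\<^sup>+ y. ennreal (\<bar>f y\<bar> + \<epsilon> + a * cosh (b * (2 * real n0 * d)))
              \<partial>(convolution (return borel x) (conv_pow rho (k + n0)))) \<le> ennreal (C * g (k + n0 + 1))"
        using term_bound[OF P _ Q A(8,2) e A(4) _ A(3)] unfolding C_def g_def z_def by simp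
    qed
  next
    show "(\<Sum>k. ennreal (exp (-lam) * lam ^ (k + n0) / fact (k + n0 + 1)) *
           (\<integral>\<^sup>+ y. ennreal (\<bar>f y\<bar> + \<epsilon> + a * cosh (b * (2 * real n0 * d)))
              \<partial>(conv_pow rho (k + n0 + 1)))) < ennreal \<epsilon>"
    proof (rule key)
      fix k
      show "ennreal (exp (-lam) * lam ^ (k + n0) / fact (k + n0 + 1)) *
           (\<integral>\<^sup>+ y. ennreal (\<bar>f y\<bar> + \<epsilon> + a * cosh (b * (2 * real n0 * d)))
              \<partial>(conv_pow rho (k + n0 + 1))) \<le> ennreal (C * g (k + n0 + 1))"
        using term_bound[of "conv_pow rho (k+n0+1)" "k+n0" d a \<epsilon> lam n0 f b] cp[of "k+n0+1"] A(8,2,4,3) e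
        unfolding C_def g_def z_def by simp
    qed
  qed
qed

end
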